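(* For every $s\in\mathbb{C}$ with $\Re(s)>1$, $$(2^s+1)\sum_{n\ge1}\frac{t_{n-1}}{n^s}+(2^s-1)\sum_{n\ge1}\frac{t_n}{n^s}=2^s\zeta(s).$$
   Context: For $n\ge 0$, let $t_n\in\{0,1\}$ denote the sum of the binary digits of $n$ reduced modulo $2$ (so $t_0=0$; this is the Thue–Morse sequence). $\zeta(s)=\sum_{n\ge1}n^{-s}$ is the Riemann zeta function. *)

theory Defs
  imports "HOL-Analysis.Analysis"
begin

fun bin_digit_sum :: "nat \<Rightarrow> nat" where
  "bin_digit_sum n = (if n = 0 then 0 else n mod 2 + bin_digit_sum (n div 2))"

declare bin_digit_sum.simps[simp del]

definition thue_morse :: "nat \<Rightarrow> nat" where
  "thue_morse n = bin_digit_sum n mod 2"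

text \<open>Riemann zeta function on the half-plane Re s > 1, given by its Dirichlet series
  (the only region used in the statement).\<close>
definition zeta :: "complex \<Rightarrow> complex" where
  "zeta s = (\<Sum>n. 1 / (of_nat (Suc n)) powr s)"

end

theory Submission
  imports Defs
begin

lemma bds_even: "bin_digit_sum (2*k) = bin_digit_sum k"
  by (cases "k = 0") (simp_all add: bin_digit_sum.simps[of "2*k"] bin_digit_sum.simps[of 0])

lemma bds_odd: "bin_digit_sum (2*k+1) = Suc (bin_digit_sum k)"
  by (subst bin_digit_sum.simps) simp

lemma tm_le1: "thue_morse n \<le> 1"
  unfolding thue_morse_def by simp

lemma tm_even: "thue_morse (2*k) = thue_morse k"
  unfolding thue_morse_def by (simp add: bds_even)

lemma tm_odd: "(of_nat (thue_morse (2*k+1)) :: complex) = 1 - of_nat (thue_morse k)"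
proof -
  have "thue_morse (2*k+1) = 1 - thue_morse k"
    unfolding thue_morse_def bds_odd by presburger
  then show ?thesis using tm_le1[of k] by (simp add: of_nat_diff)
qed

lemma powr_double: "(of_nat (2*k) :: complex) powr s = 2 powr s * of_nat k powr s"
proof -
  have "(of_nat (2*k) :: complex) = 2 * of_nat k" by simp
  then show ?thesis by (simp add: powr_times_real)
qed

lemma powr_double': "(2 * of_nat k :: complex) powr s = 2 powr s * of_nat k powr s"
  using powr_double[of k s] by simp

lemma split_even_odd:
  fixes f :: "nat \<Rightarrow> complex"
  assumes "summable (\<lambda>n. norm (f n))"
  shows "suminf f = (\<Sum>k. f (2*k)) + (\<Sum>k. f (2*k+1))"
    "summable (\<lambda>k. f (2*k))" "summable (\<lambda>k. f (2*k+1))"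
proof -
  define fe where "fe n = (if even n then f n else 0)" for n
  define fo where "fo n = (if odd n then f n else 0)" for n
  have se: "summable fe"
    by (rule summable_norm_cancel, rule summable_comparison_test[OF _ assms]) (auto simp: fe_def)
  have so: "summable fo"
    by (rule summable_norm_cancel, rule summable_comparison_test[OF _ assms]) (auto simp: fo_def)
  have sm1: "strict_mono (\<lambda>k::nat. 2*k)" by (auto simp: strict_mono_def)
  have sm2: "strict_mono (\<lambda>k::nat. 2*k+1)" by (auto simp: strict_mono_def)
  have ze: "\<And>n. n \<notin> range (\<lambda>k::nat. 2*k) \<Longrightarrow> fe n = 0"
    by (auto simp: fe_def elim!: evenE)
  have zo: "\<And>n. n \<notin> range (\<lambda>k::nat. 2*k+1) \<Longrightarrow> fo n = 0"
    by (auto simp: fo_def elim!: oddE)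
  have e1: "(\<lambda>k. fe (2*k)) = (\<lambda>k. f (2*k))" by (auto simp: fe_def)
  have o1: "(\<lambda>k. fo (2*k+1)) = (\<lambda>k. f (2*k+1))" by (auto simp: fo_def)
  have "suminf fe = (\<Sum>k. f (2*k))"
    using suminf_mono_reindex[of "\<lambda>k. 2*k" fe, OF sm1 ze] e1 by simp
  moreover have "suminf fo = (\<Sum>k. f (2*k+1))"
    using suminf_mono_reindex[of "\<lambda>k. 2*k+1" fo, OF sm2 zo] o1 by simp
  moreover have "f = (\<lambda>n. fe n + fo n)" by (auto simp: fe_def fo_def)
  ultimately show "suminf f = (\<Sum>k. f (2*k)) + (\<Sum>k. f (2*k+1))"
    using suminf_add[OF se so] by simp
  show "summable (\<lambda>k. f (2*k))"
    using summable_mono_reindex[of "\<lambda>k. 2*k" fe, OF sm1 ze] se e1 by simp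
  show "summable (\<lambda>k. f (2*k+1))"
    using summable_mono_reindex[of "\<lambda>k. 2*k+1" fo, OF sm2 zo] so o1 by simp
qed

lemma norm_powr_nat: "norm ((of_nat m :: complex) powr s) = real m powr Re s"
  by (subst norm_powr_real_powr) auto

lemma dir_summable:
  fixes c :: "nat \<Rightarrow> complex"
  assumes "Re s > 1" and "\<And>m. norm (c m) \<le> 1"
  shows "summable (\<lambda>m. norm (c m / of_nat m powr s))"
proof -
  have S: "summable (\<lambda>m. real m powr (- Re s))"
    using assms(1) by (subst summable_real_powr_iff) auto
  show ?thesis
  proof (rule summable_comparison_test[OF _ S], intro exI[of _ 0] allI impI)
    fix m :: nat
    have "norm (c m / of_nat m powr s) = norm (c m) / real m powr Re s"
      by (simp add: norm_divide norm_powr_nat)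
    also have "\<dots> \<le> 1 / real m powr Re s"
      using assms(2)[of m] by (simp add: divide_right_mono)
    also have "\<dots> = real m powr (- Re s)"
      by (cases "m = 0") (simp_all add: powr_minus_divide)
    finally show "norm (norm (c m / of_nat m powr s)) \<le> real m powr (- Re s)" by simp
  qed
qed

theorem theorem3:
  fixes s :: complex
  assumes "Re s > 1"
  shows "(2 powr s + 1) * (\<Sum>n. of_nat (thue_morse n) / (of_nat (Suc n)) powr s)
         + (2 powr s - 1) * (\<Sum>n. of_nat (thue_morse (Suc n)) / (of_nat (Suc n)) powr s)
         = 2 powr s * zeta s"
proof -
  define P :: complex where "P = 2 powr s"
  have P0: "P \<noteq> 0" unfolding P_def by simp
  define T :: "nat \<Rightarrow> complex" where "T m = of_nat (thue_morse m)" for m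
  have nT: "norm (T m) \<le> 1" for m using tm_le1[of m] by (simp add: T_def)
  define hA where "hA m = T (m - 1) / of_nat m powr s" for m
  define hB where "hB m = T m / of_nat m powr s" for m
  define hZ where "hZ m = 1 / (of_nat m :: complex) powr s" for m
  define O1 where "O1 k = T k / of_nat (2*k+1) powr s" for k
  have sA: "summable (\<lambda>m. norm (hA m))" unfolding hA_def by (rule dir_summable[OF assms nT])
  have sB: "summable (\<lambda>m. norm (hB m))" unfolding hB_def by (rule dir_summable[OF assms nT])
  have sZ: "summable (\<lambda>m. norm (hZ m))" unfolding hZ_def by (rule dir_summable[OF assms]) simp
  have sA': "summable hA" "summable hB" "summable hZ"
    using sA sB sZ summable_norm_cancel by blast+
  have A_eq: "(\<Sum>n. of_nat (thue_morse n) / (of_nat (Suc n)) powr s) = suminf hA"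
    using suminf_split_head[OF sA'(1)] by (simp add: hA_def T_def)
  have B_eq: "(\<Sum>n. of_nat (thue_morse (Suc n)) / (of_nat (Suc n)) powr s) = suminf hB"
    using suminf_split_head[OF sA'(2)] by (simp add: hB_def T_def)
  have Z_eq: "zeta s = suminf hZ"
    using suminf_split_head[OF sA'(3)] by (simp add: hZ_def zeta_def)
  have Ae: "hA (2*k) = (hZ k - hA k) / P" for k
  proof (cases "k = 0")
    case True then show ?thesis by (simp add: hA_def hZ_def)
  next
    case False
    then have "2*k - 1 = 2*(k-1)+1" by simp
    then have "T (2*k-1) = 1 - T (k-1)" unfolding T_def by (simp only: tm_odd)
    have "hA (2*k) = (1 - T (k-1)) / (P * of_nat k powr s)"
      unfolding hA_def P_def powr_double by (simp only: \<open>T (2*k-1) = 1 - T (k-1)\<close>)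
    then show ?thesis by (simp add: hA_def hZ_def diff_divide_distrib mult.commute)
  qed
  have Ao: "hA (2*k+1) = O1 k" for k by (simp add: hA_def O1_def T_def tm_even)
  have Be: "hB (2*k) = hB k / P" for k unfolding hB_def T_def tm_even powr_double P_def by (simp add: mult.commute)
  have Bo: "hB (2*k+1) = hZ (2*k+1) - O1 k" for k
    unfolding hB_def hZ_def O1_def T_def tm_odd by (simp add: diff_divide_distrib)
  have Ze: "hZ (2*k) = hZ k / P" for k unfolding hZ_def powr_double P_def by (simp add: mult.commute)
  note spA = split_even_odd[OF sA] and spB = split_even_odd[OF sB] and spZ = split_even_odd[OF sZ]
  have sO1: "summable O1" using spA(3) Ao by simp
  have sOZ: "summable (\<lambda>k. hZ (2*k+1))" using spZ(3) .
  have eA: "suminf hA = (suminf hZ - suminf hA) / P + suminf O1"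
  proof -
    have "(\<Sum>k. hA (2*k)) = (\<Sum>k. (hZ k - hA k) / P)" by (simp add: Ae)
    also have "\<dots> = (suminf hZ - suminf hA) / P"
      using suminf_divide[OF summable_diff[OF sA'(3) sA'(1)]] suminf_diff[OF sA'(3) sA'(1)] by simp
    finally have 1: "(\<Sum>k. hA (2*k)) = (suminf hZ - suminf hA) / P" .
    have 2: "(\<lambda>k. hA (2*k+1)) = O1" by (intro ext Ao)
    have "suminf hA = (\<Sum>k. hA (2*k)) + (\<Sum>k. hA (2*k+1))" by (rule spA(1))
    also have "\<dots> = (suminf hZ - suminf hA) / P + suminf O1" by (simp only: 1 2)
    finally show ?thesis .
  qed
  have eB: "suminf hB = suminf hB / P + (\<Sum>k. hZ (2*k+1)) - suminf O1"
  proof -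
    have "(\<Sum>k. hB (2*k)) = (\<Sum>k. hB k / P)" by (simp add: Be)
    also have "\<dots> = suminf hB / P" using suminf_divide[OF sA'(2)] by simp
    finally have 1: "(\<Sum>k. hB (2*k)) = suminf hB / P" .
    have 2: "(\<Sum>k. hB (2*k+1)) = (\<Sum>k. hZ (2*k+1)) - suminf O1"
    proof -
      have "(\<lambda>k. hB (2*k+1)) = (\<lambda>k. hZ (2*k+1) - O1 k)" by (intro ext Bo)
      then show ?thesis using suminf_diff[OF sOZ sO1] by simp
    qed
    have "suminf hB = (\<Sum>k. hB (2*k)) + (\<Sum>k. hB (2*k+1))" by (rule spB(1))
    also have "\<dots> = suminf hB / P + ((\<Sum>k. hZ (2*k+1)) - suminf O1)" by (simp only: 1 2)
    finally show ?thesis by (simp only: add_diff_eq)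
  qed
  have eZ: "suminf hZ = suminf hZ / P + (\<Sum>k. hZ (2*k+1))"
  proof -
    have "(\<Sum>k. hZ (2*k)) = (\<Sum>k. hZ k / P)" by (simp add: Ze)
    also have "\<dots> = suminf hZ / P" using suminf_divide[OF sA'(3)] by simp
    finally have 1: "(\<Sum>k. hZ (2*k)) = suminf hZ / P" .
    have "suminf hZ = (\<Sum>k. hZ (2*k)) + (\<Sum>k. hZ (2*k+1))" by (rule spZ(1))
    also have "\<dots> = suminf hZ / P + (\<Sum>k. hZ (2*k+1))" by (simp only: 1)
    finally show ?thesis .
  qed
  have fin: "(P + 1) * suminf hA + (P - 1) * suminf hB = P * suminf hZ"
  proof -
    define a where "a = suminf hA"
    define b where "b = suminf hB"
    define z where "z = suminf hZ"
    define o1 where "o1 = suminf O1"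
    define oz where "oz = (\<Sum>k. hZ (2*k+1))"
    have e1: "a = (z - a) / P + o1" using eA unfolding a_def z_def o1_def .
    have e2: "b = b / P + oz - o1" using eB unfolding b_def oz_def o1_def .
    have e3: "z = z / P + oz" using eZ unfolding z_def oz_def .
    have 1: "P * a = z - a + P * o1"
    proof -
      have "P * a = P * ((z - a) / P + o1)" using e1 by (rule arg_cong)
      also have "\<dots> = z - a + P * o1" using P0 by (simp add: distrib_left)
      finally show ?thesis .
    qed
    have 2: "P * b = b + P * oz - P * o1"
    proof -
      have "P * b = P * (b / P + oz - o1)" using e2 by (rule arg_cong)
      also have "\<dots> = b + P * oz - P * o1" using P0 by (simp add: distrib_left right_diff_distrib)
      finally show ?thesis .
    qed
    have 3: "P * z = z + P * oz"
    proof -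
      have "P * z = P * (z / P + oz)" using e3 by (rule arg_cong)
      also have "\<dots> = z + P * oz" using P0 by (simp add: distrib_left)
      finally show ?thesis .
    qed
    have "(P + 1) * a + (P - 1) * b = (P * a + a) + (P * b - b)"
      by (simp add: algebra_simps)
    also have "\<dots> = P * z" using 1 2 3 by simp
    finally have "(P + 1) * a + (P - 1) * b = P * z" .
    then show ?thesis unfolding a_def b_def z_def .
  qed
  show ?thesis using fin A_eq B_eq Z_eq unfolding P_def by simp
qed

end
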